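(* Let $P$ be a computable probability measure on the binary tree, and let $H(0\mid x)$ denote the best-explanation prediction defined in the context. Then \[ \sum_{x\in\{0,1\}^*} P(x)\,\bigl[P(0\mid x)-H(0\mid x)\bigr]^2<\infty . \] Moreover, this sum is bounded by $O\bigl(K(P)\,2^{1.5K(P)}\bigr)$, where the constant in the $O(\cdot)$ does not depend on $P$.
   Context: A measure (distribution) on the binary tree is a function $P:\{0,1\}^*\to\mathbb{R}_{\ge 0}$ with rational values such that $P(\Lambda)=1$ for the empty word $\Lambda$ and $P(x0)+P(x1)=P(x)$ for every string $x$. It is computable if some algorithm outputs $P(x)$ on input $x$. Conditional probabilities are $P(b\mid x)=P(xb)/P(x)$ for $b\in\{0,1\}$; terms with $P(x)=0$ have weight zero in the sum. $K$ denotes prefix (Kolmogorov) complexity. For a computable measure $Q$, $K(Q)$ is the prefix complexity of $Q$, i.e. the minimal prefix complexity of a program computing $Q$. All logarithms are binary. For a string $x$, a best explanation of $x$ is a computable measure $Q$ minimizing $3K(Q)-\log Q(x)$ over all computable measures; if there are several minimizers, any one is chosen. The prediction is $H(b\mid x)=Q(xb)/Q(x)$, where $Q$ is the chosen best explanation of $x$. *)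

theory Defs
  imports "HOL-Analysis.Analysis" "HOL-Library.Nat_Bijection"
begin

datatype recf = Zero | Succ | Proj nat | Comp recf "recf list" | Prim recf recf | Mn recf

inductive eval :: "recf \<Rightarrow> nat list \<Rightarrow> nat \<Rightarrow> bool" where
  eval_Zero: "eval Zero xs 0"
| eval_Succ: "eval Succ (x # xs) (Suc x)"
| eval_Proj: "i < length xs \<Longrightarrow> eval (Proj i) xs (xs ! i)"
| eval_Comp: "list_all2 (\<lambda>g y. eval g xs y) gs ys \<Longrightarrow> eval f ys z \<Longrightarrow> eval (Comp f gs) xs z"
| eval_Prim0: "eval f xs z \<Longrightarrow> eval (Prim f g) (0 # xs) z"
| eval_PrimS: "eval (Prim f g) (n # xs) y \<Longrightarrow> eval g (n # y # xs) z \<Longrightarrow> eval (Prim f g) (Suc n # xs) z"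
| eval_Mn: "eval f (n # xs) 0 \<Longrightarrow> (\<forall>m<n. \<exists>y. eval f (m # xs) (Suc y)) \<Longrightarrow> eval (Mn f) xs n"
monos list.rel_mono

fun recf_encode :: "recf \<Rightarrow> nat" where
  "recf_encode Zero = prod_encode (0, 0)"
| "recf_encode Succ = prod_encode (1, 0)"
| "recf_encode (Proj i) = prod_encode (2, i)"
| "recf_encode (Comp f gs) = prod_encode (3, prod_encode (recf_encode f, list_encode (map recf_encode gs)))"
| "recf_encode (Prim f g) = prod_encode (4, prod_encode (recf_encode f, recf_encode g))"
| "recf_encode (Mn f) = prod_encode (5, recf_encode f)"

text \<open>Bijective base-2 encoding of binary strings (False = 0, True = 1).\<close>
fun bin_encode :: "bool list \<Rightarrow> nat" where
  "bin_encode [] = 0"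
| "bin_encode (b # bs) = 2 * bin_encode bs + (if b then 2 else 1)"

definition rat_encode :: "rat \<Rightarrow> nat" where
  "rat_encode q = prod_encode (int_encode (fst (quotient_of q)), nat (snd (quotient_of q)))"

definition prefix_free :: "bool list set \<Rightarrow> bool" where
  "prefix_free D \<longleftrightarrow> (\<forall>p\<in>D. \<forall>q\<in>D. (\<exists>r. q = p @ r) \<longrightarrow> p = q)"

definition prefix_machine :: "(bool list \<Rightarrow> nat option) \<Rightarrow> bool" where
  "prefix_machine M \<longleftrightarrow>
     (\<exists>e. \<forall>p y. M p = Some y \<longleftrightarrow> eval e [bin_encode p] y) \<and> prefix_free {p. M p \<noteq> None}"

definition optimal_prefix_machine :: "(bool list \<Rightarrow> nat option) \<Rightarrow> bool" where
  "optimal_prefix_machine U \<longleftrightarrow> prefix_machine U \<and>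
     (\<forall>M. prefix_machine M \<longrightarrow>
        (\<exists>c. \<forall>p y. M p = Some y \<longrightarrow> (\<exists>q. U q = Some y \<and> length q \<le> length p + c)))"

definition is_measure :: "(bool list \<Rightarrow> rat) \<Rightarrow> bool" where
  "is_measure P \<longleftrightarrow> P [] = 1 \<and> (\<forall>x. P x \<ge> 0) \<and> (\<forall>x. P (x @ [False]) + P (x @ [True]) = P x)"

definition computes :: "recf \<Rightarrow> (bool list \<Rightarrow> rat) \<Rightarrow> bool" where
  "computes e Q \<longleftrightarrow> (\<forall>x. eval e [bin_encode x] (rat_encode (Q x)))"

definition computable_measure :: "(bool list \<Rightarrow> rat) \<Rightarrow> bool" where
  "computable_measure Q \<longleftrightarrow> is_measure Q \<and> (\<exists>e. computes e Q)"

definition Kmeas :: "(bool list \<Rightarrow> nat option) \<Rightarrow> (bool list \<Rightarrow> rat) \<Rightarrow> nat" where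
  "Kmeas U Q = (LEAST k. \<exists>e p. computes e Q \<and> U p = Some (recf_encode e) \<and> length p = k)"

text \<open>Best explanation of x: a computable measure minimising 3K(Q) - log Q(x)
  (measures with Q(x) = 0 have value +infinity and are never minimisers).\<close>
definition best_explanation :: "(bool list \<Rightarrow> nat option) \<Rightarrow> bool list \<Rightarrow> (bool list \<Rightarrow> rat) \<Rightarrow> bool" where
  "best_explanation U x Q \<longleftrightarrow> computable_measure Q \<and> Q x > 0 \<and>
     (\<forall>Q'. computable_measure Q' \<and> Q' x > 0 \<longrightarrow>
        3 * real (Kmeas U Q) - log 2 (real_of_rat (Q x))
          \<le> 3 * real (Kmeas U Q') - log 2 (real_of_rat (Q' x)))"

text \<open>Prediction H(0|x) given a selection Qs of best explanations (Qs x is the chosen one for x).\<close>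
definition pred0 :: "(bool list \<Rightarrow> bool list \<Rightarrow> rat) \<Rightarrow> bool list \<Rightarrow> real" where
  "pred0 Qs x = real_of_rat (Qs x (x @ [False])) / real_of_rat (Qs x x)"

definition cond0 :: "(bool list \<Rightarrow> rat) \<Rightarrow> bool list \<Rightarrow> real" where
  "cond0 P x = real_of_rat (P (x @ [False])) / real_of_rat (P x)"

end

theory Submission imports Defs begin

inductive_cases evZeroE: "eval Zero xs z"
inductive_cases evSuccE: "eval Succ xs z"
inductive_cases evProjE: "eval (Proj i) xs z"
inductive_cases evCompE: "eval (Comp f gs) xs z"
inductive_cases evPrimE: "eval (Prim f g) xs z"
inductive_cases evMnE: "eval (Mn f) xs z"

lemma list_all2_det:
  "list_all2 (\<lambda>g y. Q g y \<and> (\<forall>z. Q g z \<longrightarrow> y = z)) gs ys \<Longrightarrow> list_all2 Q gs ys' \<Longrightarrow> ys = ys'"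
proof (induction gs arbitrary: ys ys')
  case Nil then show ?case by simp
next
  case (Cons g gs)
  then show ?case by (cases ys; cases ys') auto
qed

lemma eval_det: "eval f xs y \<Longrightarrow> eval f xs z \<Longrightarrow> y = z"
proof (induction arbitrary: z rule: eval.induct)
  case (eval_Zero xs) then show ?case by (auto elim: evZeroE)
next
  case (eval_Succ x xs) then show ?case by (auto elim: evSuccE)
next
  case (eval_Proj i xs) then show ?case by (auto elim: evProjE)
next
  case (eval_Comp xs gs ys f z')
  from eval_Comp.prems obtain ys' where a: "list_all2 (\<lambda>g y. eval g xs y) gs ys'" and b: "eval f ys' z"
    by (auto elim: evCompE)
  have "ys = ys'"
    using list_all2_det[of "\<lambda>g y. eval g xs y" gs ys ys'] eval_Comp.IH(1) a
    by (simp add: list_all2_conv_all_nth)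
  then show ?case using eval_Comp b by simp
next
  case (eval_Prim0 f xs z0 g)
  from eval_Prim0.prems have "eval f xs z" by (rule evPrimE) auto
  then show ?case using eval_Prim0.IH by auto
next
  case (eval_PrimS f g n xs y z0)
  from eval_PrimS.prems obtain y' where a: "eval (Prim f g) (n # xs) y'" and b: "eval g (n # y' # xs) z"
    by (rule evPrimE) auto
  have "y = y'" using eval_PrimS.IH(1) a by auto
  then show ?case using eval_PrimS.IH(2) b by auto
next
  case (eval_Mn f n xs)
  from eval_Mn.prems obtain n' where z: "z = n'" and a: "eval f (n' # xs) 0"
     and b: "\<forall>m<n'. \<exists>y. eval f (m # xs) (Suc y)" by (auto elim: evMnE)
  show ?case
  proof (cases n n' rule: linorder_cases)
    case less
    then obtain y where "eval f (n # xs) (Suc y)" using b by auto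
    then show ?thesis using eval_Mn.IH(1) by auto
  next
    case greater
    then obtain y where "eval f (n' # xs) (Suc y)" "\<forall>z. eval f (n' # xs) z \<longrightarrow> Suc y = z"
      using eval_Mn.IH(2) by blast
    then show ?thesis using a by auto
  qed (use z in auto)
qed

lemma recf_encode_inj: "recf_encode e = recf_encode e' \<Longrightarrow> e = e'"
proof (induction e arbitrary: e')
  case Zero then show ?case by (cases e') (auto simp: prod_encode_eq)
next
  case Succ then show ?case by (cases e') (auto simp: prod_encode_eq)
next
  case (Proj i) then show ?case by (cases e') (auto simp: prod_encode_eq)
next
  case (Comp f gs)
  then show ?case
  proof (cases e')
    case (Comp f' gs')
    with Comp.prems have 1: "recf_encode f = recf_encode f'" and
      2: "map recf_encode gs = map recf_encode gs'"
      by (auto simp: prod_encode_eq dest: inj_onD[OF inj_list_encode])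
    have "gs = gs'" using 2 Comp.IH(2)
    proof (induction gs arbitrary: gs')
      case Nil then show ?case by simp
    next
      case (Cons a gs) then show ?case by (cases gs') auto
    qed
    then show ?thesis using Comp 1 Comp.IH(1) by simp
  qed (auto simp: prod_encode_eq)
next
  case (Prim f g) then show ?case by (cases e') (auto simp: prod_encode_eq)
next
  case (Mn f) then show ?case by (cases e') (auto simp: prod_encode_eq)
qed

lemma rat_encode_inj: "rat_encode a = rat_encode b \<Longrightarrow> a = b"
proof -
  assume h: "rat_encode a = rat_encode b"
  have pa: "snd (quotient_of a) > 0" and pb: "snd (quotient_of b) > 0"
    using quotient_of_denom_pos' by auto
  from h have "fst (quotient_of a) = fst (quotient_of b)" "nat (snd (quotient_of a)) = nat (snd (quotient_of b))"
    by (auto simp: rat_encode_def prod_encode_eq dest: inj_onD[OF inj_int_encode])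
  with pa pb have "quotient_of a = quotient_of b" by (simp add: prod_eq_iff)
  then show ?thesis by (rule quotient_of_inject)
qed

lemma computes_unique: "computes e Q \<Longrightarrow> computes e Q' \<Longrightarrow> Q = Q'"
  unfolding computes_def by (auto intro!: ext rat_encode_inj dest: eval_det)

fun cst :: "nat \<Rightarrow> recf" where
  "cst 0 = Zero"
| "cst (Suc v) = Comp Succ [cst v]"

lemma eval_cst: "eval (cst v) xs v"
  by (induction v) (auto intro!: eval.intros)

lemma eval_cstD: "eval (cst v) xs y \<Longrightarrow> y = v"
  by (induction v arbitrary: y) (auto elim!: evZeroE evCompE evSuccE simp: list_all2_Cons1)

definition ev :: "nat \<Rightarrow> recf" where "ev v = Comp (cst v) [Mn (Proj 1)]"

lemma eval_ev: "eval (ev v) [m] y \<longleftrightarrow> m = 0 \<and> y = v"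
proof
  assume "eval (ev v) [m] y"
  then show "m = 0 \<and> y = v"
    unfolding ev_def by (auto elim!: evCompE evMnE evProjE simp: list_all2_Cons1 dest: eval_cstD)
next
  assume "m = 0 \<and> y = v"
  have "eval (Proj 1) [0, 0] 0" using eval_Proj[of 1 "[0,0::nat]"] by simp
  then have "eval (Mn (Proj 1)) [0] 0" by (intro eval_Mn) auto
  then have "list_all2 (\<lambda>g y. eval g [0] y) [Mn (Proj 1)] [0]" by simp
  moreover assume "m = 0 \<and> y = v"
  ultimately show "eval (ev v) [m] y" unfolding ev_def
    by (auto intro: eval_Comp eval_cst)
qed

lemma bin_encode_0: "bin_encode p = 0 \<longleftrightarrow> p = []"
  by (cases p) auto

lemma U_has: assumes "optimal_prefix_machine U" shows "\<exists>q. U q = Some v"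
proof -
  let ?M = "\<lambda>p::bool list. if p = [] then Some v else None"
  have "prefix_machine ?M"
    unfolding prefix_machine_def prefix_free_def
    by (rule conjI, rule exI[of _ "ev v"]) (auto simp: eval_ev bin_encode_0)
  with assms obtain c where "\<forall>p y. ?M p = Some y \<longrightarrow> (\<exists>q. U q = Some y \<and> length q \<le> length p + c)"
    unfolding optimal_prefix_machine_def by blast
  then show ?thesis by (drule_tac x="[]" in spec) auto
qed

lemma U_nil: assumes "optimal_prefix_machine U" shows "U [] = None"
proof (rule ccontr)
  assume "U [] \<noteq> None"
  obtain q0 q1 where "U q0 = Some 0" "U q1 = Some 1" using U_has[OF assms] by blast
  moreover have "prefix_free {p. U p \<noteq> None}" using assms
    unfolding optimal_prefix_machine_def prefix_machine_def by blast
  ultimately have "q0 = []" "q1 = []" using \<open>U [] \<noteq> None\<close> unfolding prefix_free_def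
    by (metis (mono_tags, lifting) append_Nil mem_Collect_eq option.distinct(1))+
  with \<open>U q0 = Some 0\<close> \<open>U q1 = Some 1\<close> show False by simp
qed

lemma Kmeas_ex: assumes "optimal_prefix_machine U" "computable_measure Q"
  shows "\<exists>e p. computes e Q \<and> U p = Some (recf_encode e) \<and> length p = Kmeas U Q"
proof -
  obtain e where e: "computes e Q" using assms(2) unfolding computable_measure_def by blast
  obtain q where "U q = Some (recf_encode e)" using U_has[OF assms(1)] by blast
  with e have "\<exists>k e p. computes e Q \<and> U p = Some (recf_encode e) \<and> length p = k" by blast
  then show ?thesis unfolding Kmeas_def by (rule LeastI_ex)
qed

lemma Kmeas_pos: assumes "optimal_prefix_machine U" "computable_measure Q"
  shows "Kmeas U Q \<ge> 1"
  using Kmeas_ex[OF assms] U_nil[OF assms(1)] by (cases "Kmeas U Q") auto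


lemma core_ineq:
  fixes s1 s2 t1 t2 :: real
  assumes "s1 \<ge> 0" "s2 \<ge> 0" "t1 \<ge> 0" "t2 \<ge> 0" "s1^2 + t1^2 = 1" "s2^2 + t2^2 = 1"
  shows "(s1^2 - s2^2)^2 \<le> 4 * (1 - s1 * s2 - t1 * t2)"
proof -
  have le1: "s1 \<le> 1" "s2 \<le> 1" "t1 \<le> 1" "t2 \<le> 1" using assms
    by (smt (verit) power2_le_imp_le one_power2 zero_le_power2)+
  have "s1 + s2 \<le> 2" using le1 by linarith
  then have "(s1 + s2)^2 \<le> 2^2" by (intro power_mono) (use assms in auto)
  then have "(s1 + s2)^2 \<le> 4" by simp
  then have A: "(s1^2 - s2^2)^2 \<le> 4 * (s1 - s2)^2"
  proof -
    have "(s1^2 - s2^2)^2 = (s1 - s2)^2 * (s1 + s2)^2" by (simp add: power2_eq_square algebra_simps)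
    also have "\<dots> \<le> (s1 - s2)^2 * 4" using \<open>(s1 + s2)^2 \<le> 4\<close> by (intro mult_left_mono) auto
    finally show ?thesis by simp
  qed
  have "t1 + t2 \<le> 2" using le1 by linarith
  then have "(t1 + t2)^2 \<le> 2^2" by (intro power_mono) (use assms in auto)
  then have "(t1 + t2)^2 \<le> 4" by simp
  then have B: "(t1^2 - t2^2)^2 \<le> 4 * (t1 - t2)^2"
  proof -
    have "(t1^2 - t2^2)^2 = (t1 - t2)^2 * (t1 + t2)^2" by (simp add: power2_eq_square algebra_simps)
    also have "\<dots> \<le> (t1 - t2)^2 * 4" using \<open>(t1 + t2)^2 \<le> 4\<close> by (intro mult_left_mono) auto
    finally show ?thesis by simp
  qed
  have C: "(t1^2 - t2^2)^2 = (s1^2 - s2^2)^2" using assms(5,6) by (smt (verit) power2_minus)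
  have D: "(s1 - s2)^2 + (t1 - t2)^2 = 2 - 2 * s1 * s2 - 2 * t1 * t2"
    using assms(5,6) by (simp add: power2_eq_square algebra_simps)
  have E: "4 * (1 - s1 * s2 - t1 * t2) = 2 * (s1 - s2)^2 + 2 * (t1 - t2)^2" using D by (simp add: algebra_simps)
  have G: "\<And>X Y Z W::real. X \<le> 4*Y \<Longrightarrow> W \<le> 4*Z \<Longrightarrow> W = X \<Longrightarrow> X \<le> 2*Y+2*Z" by linarith
  show ?thesis unfolding E by (rule G[OF A B C])
qed

definition rm :: "(bool list \<Rightarrow> rat) \<Rightarrow> bool list \<Rightarrow> real" where
  "rm P x = real_of_rat (P x)"

lemma rm_props:
  assumes "is_measure P"
  shows "rm P [] = 1" "rm P x \<ge> 0" "rm P (x @ [False]) + rm P (x @ [True]) = rm P x"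
  using assms unfolding is_measure_def rm_def by (auto simp flip: of_rat_add)

definition gg :: "(bool list \<Rightarrow> rat) \<Rightarrow> (bool list \<Rightarrow> rat) \<Rightarrow> bool list \<Rightarrow> real" where
  "gg P Q x = sqrt (rm P x * rm Q x)"

definition dd :: "(bool list \<Rightarrow> rat) \<Rightarrow> (bool list \<Rightarrow> rat) \<Rightarrow> bool list \<Rightarrow> real" where
  "dd P Q x = gg P Q x - gg P Q (x @ [False]) - gg P Q (x @ [True])"

lemma pointwise:
  assumes P: "is_measure P" and Q: "is_measure Q" and pos: "rm P x > 0" "rm Q x > 0"
  shows "gg P Q x * (rm P (x @ [False]) / rm P x - rm Q (x @ [False]) / rm Q x)^2 \<le> 4 * dd P Q x"
proof -
  define a where "a = rm P (x @ [False])"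
  define b where "b = rm P (x @ [True])"
  define c where "c = rm Q (x @ [False])"
  define e where "e = rm Q (x @ [True])"
  define pp where "pp = rm P x"
  define qq where "qq = rm Q x"
  have ab: "a + b = pp" "a \<ge> 0" "b \<ge> 0" using rm_props[OF P] unfolding a_def b_def pp_def by auto
  have ce: "c + e = qq" "c \<ge> 0" "e \<ge> 0" using rm_props[OF Q] unfolding c_def e_def qq_def by auto
  have ppos: "pp > 0" "qq > 0" using pos unfolding pp_def qq_def by auto
  define s1 where "s1 = sqrt (a / pp)"
  define t1 where "t1 = sqrt (b / pp)"
  define s2 where "s2 = sqrt (c / qq)"
  define t2 where "t2 = sqrt (e / qq)"
  have s1sq: "s1^2 = a / pp" unfolding s1_def using ab ppos by simp
  have t1sq: "t1^2 = b / pp" unfolding t1_def using ab ppos by simp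
  have s2sq: "s2^2 = c / qq" unfolding s2_def using ce ppos by simp
  have t2sq: "t2^2 = e / qq" unfolding t2_def using ce ppos by simp
  have "a/pp + b/pp = (a+b)/pp" by (rule add_divide_distrib[symmetric])
  also have "\<dots> = 1" using ab(1) ppos by simp
  finally have n1: "s1^2 + t1^2 = 1" unfolding s1sq t1sq .
  have "c/qq + e/qq = (c+e)/qq" by (rule add_divide_distrib[symmetric])
  also have "\<dots> = 1" using ce(1) ppos by simp
  finally have n2: "s2^2 + t2^2 = 1" unfolding s2sq t2sq .
  have core: "(s1^2 - s2^2)^2 \<le> 4 * (1 - s1 * s2 - t1 * t2)"
    by (rule core_ineq[OF _ _ _ _ n1 n2]) (auto simp: s1_def s2_def t1_def t2_def n1 n2 ab ce ppos less_imp_le)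
  have g0: "gg P Q x = sqrt (pp * qq)" unfolding gg_def pp_def qq_def ..
  have g1: "gg P Q (x @ [False]) = sqrt (pp * qq) * (s1 * s2)"
    unfolding gg_def s1_def s2_def a_def[symmetric] c_def[symmetric] using ppos
    by (simp add: real_sqrt_mult[symmetric] field_simps)
  have g2: "gg P Q (x @ [True]) = sqrt (pp * qq) * (t1 * t2)"
    unfolding gg_def t1_def t2_def b_def[symmetric] e_def[symmetric] using ppos
    by (simp add: real_sqrt_mult[symmetric] field_simps)
  have "gg P Q x * (a / pp - c / qq)^2 = sqrt (pp * qq) * (s1^2 - s2^2)^2"
    using g0 s1sq s2sq by simp
  also have "\<dots> \<le> sqrt (pp * qq) * (4 * (1 - s1 * s2 - t1 * t2))"
    using core ppos by (intro mult_left_mono) auto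
  also have "\<dots> = 4 * dd P Q x" unfolding dd_def g0 g1 g2 by (simp add: algebra_simps)
  finally show ?thesis unfolding a_def c_def pp_def qq_def .
qed

lemma dd_nonneg:
  assumes P: "is_measure P" and Q: "is_measure Q"
  shows "dd P Q x \<ge> 0"
proof (cases "rm P x > 0 \<and> rm Q x > 0")
  case True
  have "0 \<le> gg P Q x * (rm P (x @ [False]) / rm P x - rm Q (x @ [False]) / rm Q x)^2"
    using True by (intro mult_nonneg_nonneg) (auto simp: gg_def)
  then show ?thesis using pointwise[OF P Q] True by fastforce
next
  case False
  then have "rm P x = 0 \<or> rm Q x = 0" using rm_props(2)[OF P, of x] rm_props(2)[OF Q, of x] by linarith
  then show ?thesis
  proof
    assume h: "rm P x = 0"
    then have "rm P (x @ [False]) = 0" "rm P (x @ [True]) = 0"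
      using rm_props(3)[OF P, of x] rm_props(2)[OF P, of "x @ [False]"] rm_props(2)[OF P, of "x @ [True]"] by linarith+
    then show ?thesis unfolding dd_def gg_def using h by simp
  next
    assume h: "rm Q x = 0"
    then have "rm Q (x @ [False]) = 0" "rm Q (x @ [True]) = 0"
      using rm_props(3)[OF Q, of x] rm_props(2)[OF Q, of "x @ [False]"] rm_props(2)[OF Q, of "x @ [True]"] by linarith+
    then show ?thesis unfolding dd_def gg_def using h by simp
  qed
qed

lemma finite_len_eq: "finite {x :: bool list. length x = n}"
  using finite_lists_length_eq[of "UNIV :: bool set" n] by simp

lemma finite_len_less: "finite {x :: bool list. length x < n}"
proof -
  have "{x :: bool list. length x < n} \<subseteq> {xs. set xs \<subseteq> UNIV \<and> length xs \<le> n}" by auto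
  then show ?thesis using finite_lists_length_le[of "UNIV :: bool set" n] finite_subset by auto
qed

lemma len_Suc_eq:
  "{x :: bool list. length x = Suc n} =
     (\<lambda>x. x @ [False]) ` {x. length x = n} \<union> (\<lambda>x. x @ [True]) ` {x. length x = n}"
proof (rule set_eqI, rule iffI)
  fix x :: "bool list" assume "x \<in> {x. length x = Suc n}"
  then have "x \<noteq> []" "length (butlast x) = n" by auto
  then have "x = butlast x @ [last x]" by simp
  then show "x \<in> (\<lambda>x. x @ [False]) ` {x. length x = n} \<union> (\<lambda>x. x @ [True]) ` {x. length x = n}"
    using \<open>length (butlast x) = n\<close> by (cases "last x") (auto intro: image_eqI)
qed auto

lemma sum_level_Suc:
  fixes h :: "bool list \<Rightarrow> real"
  shows "(\<Sum>x\<in>{x. length x = Suc n}. h x) = (\<Sum>x\<in>{x. length x = n}. h (x @ [False]) + h (x @ [True]))"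
proof -
  have d: "(\<lambda>x. x @ [False]) ` {x. length x = n} \<inter> (\<lambda>x. x @ [True]) ` {x :: bool list. length x = n} = {}"
    by auto
  have i1: "inj_on (\<lambda>x. x @ [False]) {x :: bool list. length x = n}" by (auto intro: inj_onI)
  have i2: "inj_on (\<lambda>x. x @ [True]) {x :: bool list. length x = n}" by (auto intro: inj_onI)
  show ?thesis
    unfolding len_Suc_eq sum.distrib
    by (subst sum.union_disjoint) (auto simp: finite_len_eq d sum.reindex i1 i2)
qed

lemma telescope:
  assumes P: "is_measure P" and Q: "is_measure Q"
  shows "(\<Sum>x\<in>{x. length x < n}. dd P Q x) + (\<Sum>x\<in>{x. length x = n}. gg P Q x) = 1"
proof (induction n)
  case 0
  have "{x :: bool list. length x = 0} = {[]}" by auto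
  then show ?case using rm_props(1)[OF P] rm_props(1)[OF Q] by (simp add: gg_def)
next
  case (Suc n)
  have s: "{x :: bool list. length x < Suc n} = {x. length x < n} \<union> {x. length x = n}" by auto
  have "(\<Sum>x\<in>{x. length x < Suc n}. dd P Q x) =
          (\<Sum>x\<in>{x. length x < n}. dd P Q x) + (\<Sum>x\<in>{x. length x = n}. dd P Q x)"
    unfolding s by (rule sum.union_disjoint) (auto simp: finite_len_eq finite_len_less)
  moreover have "(\<Sum>x\<in>{x. length x = n}. dd P Q x) + (\<Sum>x\<in>{x. length x = Suc n}. gg P Q x)
      = (\<Sum>x\<in>{x. length x = n}. gg P Q x)"
    unfolding sum_level_Suc dd_def by (simp add: sum_subtractf sum.distrib)
  ultimately show ?case using Suc.IH by linarith
qed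

lemma dd_sum_le:
  assumes P: "is_measure P" and Q: "is_measure Q" and F: "finite F"
  shows "(\<Sum>x\<in>F. dd P Q x) \<le> 1"
proof -
  define n where "n = Suc (Max (insert 0 (length ` F)))"
  have sub: "F \<subseteq> {x. length x < n}"
    using F unfolding n_def by (auto simp: le_imp_less_Suc)
  have "(\<Sum>x\<in>F. dd P Q x) \<le> (\<Sum>x\<in>{x. length x < n}. dd P Q x)"
    by (rule sum_mono2) (auto simp: finite_len_less sub dd_nonneg P Q)
  also have "\<dots> \<le> 1"
  proof -
    have "0 \<le> (\<Sum>x\<in>{x. length x = n}. gg P Q x)"
      by (intro sum_nonneg) (simp add: gg_def mult_nonneg_nonneg rm_props(2)[OF P] rm_props(2)[OF Q])
    then show ?thesis using telescope[OF P Q, of n] by linarith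
  qed
  finally show ?thesis .
qed

lemma T_sum_le:
  assumes P: "is_measure P" and Q: "is_measure Q" and F: "finite F"
    and pos: "\<And>x. x \<in> F \<Longrightarrow> rm P x > 0 \<and> rm Q x > 0"
  shows "(\<Sum>x\<in>F. gg P Q x * (rm P (x @ [False]) / rm P x - rm Q (x @ [False]) / rm Q x)^2) \<le> 4"
proof -
  have "(\<Sum>x\<in>F. gg P Q x * (rm P (x @ [False]) / rm P x - rm Q (x @ [False]) / rm Q x)^2)
      \<le> (\<Sum>x\<in>F. 4 * dd P Q x)"
    by (rule sum_mono) (use pointwise[OF P Q] pos in auto)
  also have "\<dots> \<le> 4" using dd_sum_le[OF P Q F] by (simp add: sum_distrib_left[symmetric])
  finally show ?thesis .
qed


definition pick :: "(bool list \<Rightarrow> nat option) \<Rightarrow> (bool list \<Rightarrow> rat) \<Rightarrow> bool list" where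
  "pick U Q = (SOME p. \<exists>e. computes e Q \<and> U p = Some (recf_encode e) \<and> length p = Kmeas U Q)"

lemma pick_spec: assumes "optimal_prefix_machine U" "computable_measure Q"
  shows "\<exists>e. computes e Q \<and> U (pick U Q) = Some (recf_encode e) \<and> length (pick U Q) = Kmeas U Q"
proof -
  have "\<exists>p. \<exists>e. computes e Q \<and> U p = Some (recf_encode e) \<and> length p = Kmeas U Q"
    using Kmeas_ex[OF assms] by blast
  from someI_ex[OF this] show ?thesis unfolding pick_def .
qed

lemma count_le:
  assumes U: "optimal_prefix_machine U" and S: "\<forall>Q\<in>S. computable_measure Q"
  shows "card {Q\<in>S. Kmeas U Q = k} \<le> 2^k"
proof -
  have inj: "inj_on (pick U) {Q\<in>S. Kmeas U Q = k}"
  proof (rule inj_onI)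
    fix Q1 Q2 assume h: "Q1 \<in> {Q\<in>S. Kmeas U Q = k}" "Q2 \<in> {Q\<in>S. Kmeas U Q = k}" "pick U Q1 = pick U Q2"
    obtain e1 where e1: "computes e1 Q1" "U (pick U Q1) = Some (recf_encode e1)"
      using pick_spec[OF U] h S by blast
    obtain e2 where e2: "computes e2 Q2" "U (pick U Q2) = Some (recf_encode e2)"
      using pick_spec[OF U] h S by blast
    have "e1 = e2" using e1 e2 h(3) by (auto intro: recf_encode_inj)
    then show "Q1 = Q2" using e1 e2 computes_unique by blast
  qed
  have img: "pick U ` {Q\<in>S. Kmeas U Q = k} \<subseteq> {p. set p \<subseteq> UNIV \<and> length p = k}"
    using pick_spec[OF U] S by auto
  have "card {Q\<in>S. Kmeas U Q = k} \<le> card {p :: bool list. set p \<subseteq> UNIV \<and> length p = k}"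
    by (rule card_inj_on_le[OF inj img]) (simp add: finite_len_eq)
  also have "\<dots> = 2^k" using card_lists_length_eq[of "UNIV :: bool set" k] by simp
  finally show ?thesis .
qed

lemma r_le: "(2::real) powr (-0.5) \<le> 3/4"
proof -
  have "(4/3::real) \<le> sqrt 2" by (rule real_le_rsqrt) (simp add: power2_eq_square)
  moreover have "(2::real) powr (-0.5) = inverse (sqrt 2)"
    using powr_half_sqrt[of 2] by (simp add: powr_minus)
  moreover have "inverse (sqrt 2) \<le> inverse (4/3::real)"
    using calculation(1) by (intro le_imp_inverse_le) auto
  ultimately show ?thesis by simp
qed

lemma weight_sum:
  assumes U: "optimal_prefix_machine U" and S: "\<forall>Q\<in>S. computable_measure Q" and fin: "finite S"
  shows "(\<Sum>Q\<in>S. 2 powr (-1.5 * real (Kmeas U Q))) \<le> 4"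
proof -
  define r :: real where "r = 2 powr (-0.5)"
  have r0: "r > 0" unfolding r_def by simp
  have r1: "r \<le> 3/4" unfolding r_def by (rule r_le)
  have wk: "2^k * 2 powr (-1.5 * real k) = r^k" for k :: nat
  proof -
    have "(2::real)^k * 2 powr (-1.5 * real k) = 2 powr (real k) * 2 powr (-1.5 * real k)"
      by (simp add: powr_realpow)
    also have "\<dots> = 2 powr (-0.5 * real k)" by (simp flip: powr_add)
    also have "\<dots> = r powr real k" unfolding r_def by (simp add: powr_powr)
    also have "\<dots> = r^k" using r0 by (simp add: powr_realpow)
    finally show ?thesis .
  qed
  let ?K = "Kmeas U"
  define N where "N = Suc (Max (insert 0 (?K ` S)))"
  have "(\<Sum>Q\<in>S. 2 powr (-1.5 * real (?K Q))) = (\<Sum>k\<in>?K ` S. \<Sum>Q\<in>{Q\<in>S. ?K Q = k}. 2 powr (-1.5 * real (?K Q)))"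
    by (rule sum.image_gen[OF fin])
  also have "\<dots> = (\<Sum>k\<in>?K ` S. real (card {Q\<in>S. ?K Q = k}) * 2 powr (-1.5 * real k))"
    by (intro sum.cong refl) simp
  also have "\<dots> \<le> (\<Sum>k\<in>?K ` S. 2^k * 2 powr (-1.5 * real k))"
  proof (intro sum_mono mult_right_mono)
    fix k show "real (card {Q\<in>S. ?K Q = k}) \<le> 2^k"
      using count_le[OF U S, of k] by (metis of_nat_le_iff of_nat_numeral of_nat_power)
  qed simp
  also have "\<dots> = (\<Sum>k\<in>?K ` S. r^k)" by (rule sum.cong[OF refl]) (rule wk)
  also have "\<dots> \<le> (\<Sum>k\<in>{..<N}. r^k)"
    by (rule sum_mono2) (use fin r0 in \<open>auto simp: le_imp_less_Suc N_def\<close>)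
  also have "\<dots> = (1 - r ^ N) / (1 - r)"
    using r1 sum_gp_strict[of r N] by simp
  also have "\<dots> \<le> 1 / (1 - r)"
    using r0 r1 by (intro divide_right_mono) auto
  also have "\<dots> \<le> 4" using r0 r1 by (simp add: field_simps)
  finally show ?thesis .
qed

lemma ratio_bound:
  fixes p q kp kq :: real
  assumes p: "p > 0" and q: "q > 0" and h: "3 * kq - log 2 q \<le> 3 * kp - log 2 p"
  shows "p \<le> 2 powr (1.5 * kp) * 2 powr (-1.5 * kq) * sqrt (p * q)"
proof -
  define t where "t = 2 powr (1.5 * kp) * 2 powr (-1.5 * kq)"
  have t0: "t > 0" unfolding t_def by simp
  have t2: "t^2 = 2 powr (3 * (kp - kq))"
    unfolding t_def power2_eq_square by (simp flip: powr_add add: algebra_simps)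
  have "log 2 (p / q) \<le> 3 * (kp - kq)" using h p q by (simp add: log_divide algebra_simps)
  then have "p / q \<le> t^2" unfolding t2 using p q by (simp add: log_le_iff)
  then have "p \<le> q * t^2" using q by (simp add: field_simps)
  then have "p * p \<le> (p * q) * t^2" using p by (metis mult.assoc mult_le_cancel_left_pos)
  then have "sqrt (p * p) \<le> sqrt ((p * q) * t^2)" by (rule real_sqrt_le_mono)
  then have "p \<le> sqrt (p * q) * t" using p t0 by (simp add: real_sqrt_mult)
  then show ?thesis unfolding t_def by (simp add: algebra_simps)
qed

lemma key_bound:
  assumes U: "optimal_prefix_machine U" and cm: "computable_measure P"
    and be: "\<forall>x. best_explanation U x (Qs x)" and F: "finite F"
  shows "(\<Sum>x\<in>F. (if P x = 0 then 0 else real_of_rat (P x) * (cond0 P x - pred0 Qs x)\<^sup>2))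
           \<le> 16 * 2 powr (1.5 * real (Kmeas U P))"
proof -
  let ?f = "\<lambda>x. if P x = 0 then 0 else real_of_rat (P x) * (cond0 P x - pred0 Qs x)\<^sup>2"
  have Pm: "is_measure P" using cm unfolding computable_measure_def by blast
  define KP where "KP = real (Kmeas U P)"
  define W where "W = (\<lambda>Q. 2 powr (-1.5 * real (Kmeas U Q)))"
  define T where "T = (\<lambda>Q x. gg P Q x * (rm P (x @ [False]) / rm P x - rm Q (x @ [False]) / rm Q x)^2)"
  define F' where "F' = {x\<in>F. P x \<noteq> 0}"
  have finF': "finite F'" using F unfolding F'_def by simp
  have QsF: "\<forall>Q\<in>Qs ` F'. computable_measure Q" using be unfolding best_explanation_def by auto
  have pos: "rm P x > 0 \<and> rm (Qs x) x > 0" if "x \<in> F'" for x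
  proof -
    have "P x \<ge> 0" using Pm unfolding is_measure_def by blast
    then have "P x > 0" using that unfolding F'_def by auto
    moreover have "Qs x x > 0" using be unfolding best_explanation_def by blast
    ultimately show ?thesis unfolding rm_def by simp
  qed
  have pt: "?f x \<le> 2 powr (1.5 * KP) * (W (Qs x) * T (Qs x) x)" if "x \<in> F'" for x
  proof -
    let ?Q = "Qs x"
    have bx: "best_explanation U x ?Q" using be by blast
    have Pp: "P x > 0" using pos[OF that] unfolding rm_def by simp
    have ineq: "3 * real (Kmeas U ?Q) - log 2 (rm ?Q x) \<le> 3 * KP - log 2 (rm P x)"
      using bx cm Pp unfolding best_explanation_def KP_def rm_def by blast
    have rb: "rm P x \<le> 2 powr (1.5 * KP) * 2 powr (-1.5 * real (Kmeas U ?Q)) * sqrt (rm P x * rm ?Q x)"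
      by (rule ratio_bound) (use pos[OF that] ineq in auto)
    have fx: "?f x = rm P x * (rm P (x @ [False]) / rm P x - rm ?Q (x @ [False]) / rm ?Q x)^2"
      using that unfolding F'_def rm_def cond0_def pred0_def by simp
    also have "\<dots> \<le> (2 powr (1.5 * KP) * 2 powr (-1.5 * real (Kmeas U ?Q)) * sqrt (rm P x * rm ?Q x))
                     * (rm P (x @ [False]) / rm P x - rm ?Q (x @ [False]) / rm ?Q x)^2"
      by (rule mult_right_mono[OF rb]) simp
    also have "\<dots> = 2 powr (1.5 * KP) * (W ?Q * T ?Q x)"
      unfolding W_def T_def gg_def by (simp add: algebra_simps)
    finally show ?thesis .
  qed
  have "(\<Sum>x\<in>F. ?f x) = (\<Sum>x\<in>F'. ?f x)"
    unfolding F'_def using F by (intro sum.mono_neutral_right) auto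
  also have "\<dots> \<le> (\<Sum>x\<in>F'. 2 powr (1.5 * KP) * (W (Qs x) * T (Qs x) x))"
    by (rule sum_mono) (rule pt)
  also have "\<dots> = 2 powr (1.5 * KP) * (\<Sum>x\<in>F'. W (Qs x) * T (Qs x) x)"
    by (simp add: sum_distrib_left)
  also have "(\<Sum>x\<in>F'. W (Qs x) * T (Qs x) x) = (\<Sum>Q\<in>Qs ` F'. \<Sum>x\<in>{x\<in>F'. Qs x = Q}. W (Qs x) * T (Qs x) x)"
    by (rule sum.image_gen[OF finF'])
  also have "\<dots> = (\<Sum>Q\<in>Qs ` F'. W Q * (\<Sum>x\<in>{x\<in>F'. Qs x = Q}. T Q x))"
    by (intro sum.cong refl) (simp add: sum_distrib_left)
  also have "\<dots> \<le> (\<Sum>Q\<in>Qs ` F'. W Q * 4)"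
  proof (intro sum_mono mult_left_mono)
    fix Q assume Q: "Q \<in> Qs ` F'"
    have Qm: "is_measure Q" using QsF Q unfolding computable_measure_def by blast
    show "(\<Sum>x\<in>{x\<in>F'. Qs x = Q}. T Q x) \<le> 4"
      unfolding T_def by (rule T_sum_le[OF Pm Qm]) (use finF' pos in auto)
    show "0 \<le> W Q" unfolding W_def by simp
  qed
  also have "\<dots> = 4 * (\<Sum>Q\<in>Qs ` F'. W Q)" unfolding sum_distrib_left by (simp add: mult.commute)
  also have "\<dots> \<le> 4 * 4"
    using weight_sum[OF U QsF] finF' unfolding W_def by simp
  finally have "(\<Sum>x\<in>F. ?f x) \<le> 2 powr (1.5 * KP) * (4 * 4)"
    by (simp add: mult_left_mono)
  then show ?thesis unfolding KP_def by simp
qed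

theorem theorem3:
  assumes "optimal_prefix_machine U"
  shows "\<exists>c::real. \<forall>P Qs.
     computable_measure P \<and> (\<forall>x. best_explanation U x (Qs x)) \<longrightarrow>
       (let f = (\<lambda>x. if P x = 0 then 0
                     else real_of_rat (P x) * (cond0 P x - pred0 Qs x)\<^sup>2)
        in f summable_on UNIV \<and>
           infsum f UNIV \<le> c * real (Kmeas U P) * 2 powr (1.5 * real (Kmeas U P)))"
proof (intro exI[of _ 16] allI impI, unfold Let_def)
  fix P Qs
  assume h: "computable_measure P \<and> (\<forall>x. best_explanation U x (Qs x))"
  let ?f = "\<lambda>x. if P x = 0 then 0 else real_of_rat (P x) * (cond0 P x - pred0 Qs x)\<^sup>2"
  have Pm: "is_measure P" using h unfolding computable_measure_def by blast
  have nn: "0 \<le> ?f x" for x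
    using Pm unfolding is_measure_def by auto
  have kb: "sum ?f F \<le> 16 * 2 powr (1.5 * real (Kmeas U P))" if "finite F" for F
    using key_bound[OF assms _ _ that] h by blast
  have sm: "?f summable_on UNIV"
  proof (rule nonneg_bdd_above_summable_on)
    show "bdd_above (sum ?f ` {F. F \<subseteq> UNIV \<and> finite F})"
      using kb by (auto intro!: bdd_aboveI)
  qed (rule nn)
  have K1: "real (Kmeas U P) \<ge> 1" using Kmeas_pos[OF assms] h by simp
  have "infsum ?f UNIV \<le> 16 * 2 powr (1.5 * real (Kmeas U P))"
    by (rule infsum_le_finite_sums[OF sm]) (rule kb)
  also have "\<dots> \<le> 16 * real (Kmeas U P) * 2 powr (1.5 * real (Kmeas U P))"
    using K1 by simp
  finally show "?f summable_on UNIV \<and> infsum ?f UNIV \<le> 16 * real (Kmeas U P) * 2 powr (1.5 * real (Kmeas U P))"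
    using sm by simp
qed

end
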